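(* Let $(X,\tau,I)$ be a $*$-extremally disconnected ideal topological space and $\gamma$ an operation on $\tau$ such that $(X,\tau)$ is $\gamma$-regular. For $V\subseteq X$ the following are equivalent: (1) $V$ is $\gamma$-open; (2) $V$ is $\alpha$-$I$-open and weakly $I$-local closed; (3) $V$ is pre-$\gamma$-$I$-open and weakly $I$-local closed; (4) $V$ is pre-$I$-open and weakly $I$-local closed; (5) $V$ is semi-$I$-open and weakly $I$-local closed; (6) $V$ is $b$-$I$-open and weakly $I$-local closed.
   Context: Let $(X,\tau)$ be a topological space; $Cl$ and $Int$ denote closure and interior in $\tau$. An ideal on $X$ is a nonempty family $I$ of subsets of $X$ such that $A\in I$, $B\subseteq A$ imply $B\in I$, and $A,B\in I$ imply $A\cup B\in I$; $(X,\tau,I)$ is then called an ideal topological space. An operation on $\tau$ is a map $\gamma:\tau\to P(X)$ with $V\subseteq\gamma(V)$ for all $V\in\tau$. A subset $A\subseteq X$ is $\gamma$-open if for every $x\in A$ there is $U\in\tau$ with $x\in U$ and $\gamma(U)\subseteq A$; $\tau_\gamma$ denotes the family of $\gamma$-open sets (so $\tau_\gamma\subseteq\tau$), and complements of $\gamma$-open sets are $\gamma$-closed. $\tau_\gamma\text{-}Int(A)$ is the union of all $\gamma$-open sets contained in $A$, and $\tau_\gamma\text{-}Cl(A)$ is the intersection of all $\gamma$-closed sets containing $A$. The local function of $A$ is $A^*=\{x\in X: U\cap A\notin I \text{ for every } U\in\tau \text{ with } x\in U\}$, and $Cl^*(A)=A\cup A^*$ (the closure operator of a topology $\tau^*$ finer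 than $\tau$). A subset $A$ is pre-$\gamma$-$I$-open if $A\subseteq \tau_\gamma\text{-}Int(Cl^*(A))$. The space $(X,\tau)$ is $\gamma$-regular if for each $x\in X$ and each open $V$ containing $x$ there is an open $U$ containing $x$ with $\gamma(U)\subseteq V$ (equivalently, $\tau_\gamma=\tau$). $(X,\tau,I)$ is $*$-extremally disconnected if $Cl^*(V)$ is open for every open $V\subseteq X$ (equivalently, $Cl^*(Int(V))\subseteq Int(Cl^*(V))$ for every $V\subseteq X$). A set $A$ is: $\alpha$-$I$-open if $A\subseteq Int(Cl^*(Int(A)))$; pre-$I$-open if $A\subseteq Int(Cl^*(A))$; semi-$I$-open if $A\subseteq Cl^*(Int(A))$; $b$-$I$-open if $A\subseteq Int(Cl^*(A))\cup Cl^*(Int(A))$; weakly $I$-local closed if $A=U\cap K$ for some open $U$ and some $\tau^*$-closed $K$ (i.e. $K^*\subseteq K$). *)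

theory Defs
  imports "HOL-Analysis.Analysis"
begin

definition is_ideal :: "'a topology \<Rightarrow> 'a set set \<Rightarrow> bool" where
  "is_ideal T I \<longleftrightarrow> I \<noteq> {} \<and> (\<forall>A\<in>I. A \<subseteq> topspace T) \<and>
     (\<forall>A B. A \<in> I \<and> B \<subseteq> A \<longrightarrow> B \<in> I) \<and> (\<forall>A B. A \<in> I \<and> B \<in> I \<longrightarrow> A \<union> B \<in> I)"

definition is_operation :: "'a topology \<Rightarrow> ('a set \<Rightarrow> 'a set) \<Rightarrow> bool" where
  "is_operation T g \<longleftrightarrow> (\<forall>V. openin T V \<longrightarrow> V \<subseteq> g V \<and> g V \<subseteq> topspace T)"

definition gamma_open :: "'a topology \<Rightarrow> ('a set \<Rightarrow> 'a set) \<Rightarrow> 'a set \<Rightarrow> bool" where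
  "gamma_open T g A \<longleftrightarrow> A \<subseteq> topspace T \<and>
     (\<forall>x\<in>A. \<exists>U. openin T U \<and> x \<in> U \<and> g U \<subseteq> A)"

definition gamma_interior :: "'a topology \<Rightarrow> ('a set \<Rightarrow> 'a set) \<Rightarrow> 'a set \<Rightarrow> 'a set" where
  "gamma_interior T g A = \<Union>{U. gamma_open T g U \<and> U \<subseteq> A}"

definition local_fun :: "'a topology \<Rightarrow> 'a set set \<Rightarrow> 'a set \<Rightarrow> 'a set" where
  "local_fun T I A = {x \<in> topspace T. \<forall>U. openin T U \<and> x \<in> U \<longrightarrow> U \<inter> A \<notin> I}"

definition cl_star :: "'a topology \<Rightarrow> 'a set set \<Rightarrow> 'a set \<Rightarrow> 'a set" where
  "cl_star T I A = A \<union> local_fun T I A"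

definition pre_gamma_I_open :: "'a topology \<Rightarrow> 'a set set \<Rightarrow> ('a set \<Rightarrow> 'a set) \<Rightarrow> 'a set \<Rightarrow> bool" where
  "pre_gamma_I_open T I g A \<longleftrightarrow> A \<subseteq> gamma_interior T g (cl_star T I A)"

definition gamma_regular :: "'a topology \<Rightarrow> ('a set \<Rightarrow> 'a set) \<Rightarrow> bool" where
  "gamma_regular T g \<longleftrightarrow> (\<forall>x V. openin T V \<and> x \<in> V \<longrightarrow> (\<exists>U. openin T U \<and> x \<in> U \<and> g U \<subseteq> V))"

definition star_extremally_disconnected :: "'a topology \<Rightarrow> 'a set set \<Rightarrow> bool" where
  "star_extremally_disconnected T I \<longleftrightarrow> (\<forall>V. openin T V \<longrightarrow> openin T (cl_star T I V))"

definition alpha_I_open :: "'a topology \<Rightarrow> 'a set set \<Rightarrow> 'a set \<Rightarrow> bool" where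
  "alpha_I_open T I A \<longleftrightarrow> A \<subseteq> T interior_of (cl_star T I (T interior_of A))"

definition pre_I_open :: "'a topology \<Rightarrow> 'a set set \<Rightarrow> 'a set \<Rightarrow> bool" where
  "pre_I_open T I A \<longleftrightarrow> A \<subseteq> T interior_of (cl_star T I A)"

definition semi_I_open :: "'a topology \<Rightarrow> 'a set set \<Rightarrow> 'a set \<Rightarrow> bool" where
  "semi_I_open T I A \<longleftrightarrow> A \<subseteq> cl_star T I (T interior_of A)"

definition b_I_open :: "'a topology \<Rightarrow> 'a set set \<Rightarrow> 'a set \<Rightarrow> bool" where
  "b_I_open T I A \<longleftrightarrow> A \<subseteq> T interior_of (cl_star T I A) \<union> cl_star T I (T interior_of A)"

text \<open>Weakly I-local closed: A = U \<inter> K, U open, K \<tau>*-closed (K* \<subseteq> K), K \<subseteq> X.\<close>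
definition weakly_I_local_closed :: "'a topology \<Rightarrow> 'a set set \<Rightarrow> 'a set \<Rightarrow> bool" where
  "weakly_I_local_closed T I A \<longleftrightarrow>
     (\<exists>U K. openin T U \<and> K \<subseteq> topspace T \<and> local_fun T I K \<subseteq> K \<and> A = U \<inter> K)"

end

theory Submission
  imports Defs
begin

lemma gopen_iff:
  assumes "is_operation T g" "gamma_regular T g" "V \<subseteq> topspace T"
  shows "gamma_open T g V \<longleftrightarrow> openin T V"
proof
  assume h: "gamma_open T g V"
  have "\<exists>U. openin T U \<and> x \<in> U \<and> U \<subseteq> V" if "x \<in> V" for x
  proof -
    obtain U where "openin T U" "x \<in> U" "g U \<subseteq> V" using h \<open>x \<in> V\<close> unfolding gamma_open_def by blast
    moreover have "U \<subseteq> g U" using assms(1) \<open>openin T U\<close> unfolding is_operation_def by blast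
    ultimately show ?thesis by blast
  qed
  then show "openin T V" using openin_subopen by blast
next
  assume o: "openin T V"
  have "\<exists>U. openin T U \<and> x \<in> U \<and> g U \<subseteq> V" if "x \<in> V" for x
    using assms(2) o that unfolding gamma_regular_def by blast
  then show "gamma_open T g V" using assms(3) unfolding gamma_open_def by blast
qed

lemma lf_mono:
  assumes "is_ideal T I" "A \<subseteq> B"
  shows "local_fun T I A \<subseteq> local_fun T I B"
proof
  fix x assume x: "x \<in> local_fun T I A"
  have dc: "\<And>C D. C \<in> I \<Longrightarrow> D \<subseteq> C \<Longrightarrow> D \<in> I" using assms(1) unfolding is_ideal_def by blast
  have "U \<inter> B \<notin> I" if "openin T U" "x \<in> U" for U
  proof
    assume "U \<inter> B \<in> I"
    then have "U \<inter> A \<in> I" using dc[of "U \<inter> B" "U \<inter> A"] assms(2) by blast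
    moreover have "U \<inter> A \<notin> I" using x that unfolding local_fun_def by blast
    ultimately show False by simp
  qed
  then show "x \<in> local_fun T I B" using x unfolding local_fun_def by blast
qed

lemma clstar_mono:
  assumes "is_ideal T I" "A \<subseteq> B"
  shows "cl_star T I A \<subseteq> cl_star T I B"
  using lf_mono[OF assms] assms(2) unfolding cl_star_def by blast

lemma key:
  assumes "is_ideal T I" "star_extremally_disconnected T I"
    and b: "b_I_open T I V" and w: "weakly_I_local_closed T I V"
  shows "openin T V"
proof -
  obtain U K where U: "openin T U" and K: "local_fun T I K \<subseteq> K" and V: "V = U \<inter> K"
    using w unfolding weakly_I_local_closed_def by blast
  have "openin T (cl_star T I (T interior_of V))"
    using assms(2) unfolding star_extremally_disconnected_def by simp
  moreover have "cl_star T I (T interior_of V) \<subseteq> cl_star T I V"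
    by (rule clstar_mono[OF assms(1)]) (simp add: interior_of_subset)
  ultimately have "cl_star T I (T interior_of V) \<subseteq> T interior_of (cl_star T I V)"
    by (simp add: interior_of_maximal)
  with b have V1: "V \<subseteq> T interior_of (cl_star T I V)" unfolding b_I_open_def by blast
  have "cl_star T I V \<subseteq> cl_star T I K" by (rule clstar_mono[OF assms(1)]) (simp add: V)
  also have "\<dots> = K" using K unfolding cl_star_def by (rule Un_absorb2)
  finally have cK: "cl_star T I V \<subseteq> K" .
  have i: "T interior_of (cl_star T I V) \<subseteq> cl_star T I V" by (rule interior_of_subset)
  have "V = U \<inter> T interior_of (cl_star T I V)"
  proof
    show "V \<subseteq> U \<inter> T interior_of cl_star T I V" using V1 V by blast
    show "U \<inter> T interior_of cl_star T I V \<subseteq> V" using i cK V by blast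
  qed
  then show ?thesis using U openin_Int openin_interior_of by metis
qed

theorem theorem3p34:
  fixes T :: "'a topology" and I :: "'a set set" and g :: "'a set \<Rightarrow> 'a set" and V :: "'a set"
  assumes "is_ideal T I"
    and "star_extremally_disconnected T I"
    and "is_operation T g"
    and "gamma_regular T g"
    and "V \<subseteq> topspace T"
  shows "(gamma_open T g V \<longleftrightarrow> alpha_I_open T I V \<and> weakly_I_local_closed T I V)
       \<and> (gamma_open T g V \<longleftrightarrow> pre_gamma_I_open T I g V \<and> weakly_I_local_closed T I V)
       \<and> (gamma_open T g V \<longleftrightarrow> pre_I_open T I V \<and> weakly_I_local_closed T I V)
       \<and> (gamma_open T g V \<longleftrightarrow> semi_I_open T I V \<and> weakly_I_local_closed T I V)
       \<and> (gamma_open T g V \<longleftrightarrow> b_I_open T I V \<and> weakly_I_local_closed T I V)"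
proof -
  have go: "gamma_open T g V \<longleftrightarrow> openin T V" using gopen_iff assms(3,4,5) by blast
  have Vc: "V \<subseteq> cl_star T I V" unfolding cl_star_def by (rule Un_upper1)
  have gi: "gamma_interior T g A \<subseteq> T interior_of A" for A
    unfolding gamma_interior_def
  proof (intro Union_least)
    fix X assume X: "X \<in> {U. gamma_open T g U \<and> U \<subseteq> A}"
    then have "gamma_open T g X" "X \<subseteq> A" by simp_all
    moreover have "X \<subseteq> topspace T" using \<open>gamma_open T g X\<close> unfolding gamma_open_def by simp
    ultimately have "openin T X" "X \<subseteq> A" using gopen_iff[OF assms(3,4)] by simp_all
    then show "X \<subseteq> T interior_of A" by (simp add: interior_of_maximal)
  qed
  have fa: "alpha_I_open T I V" and fpg: "pre_gamma_I_open T I g V" and fp: "pre_I_open T I V"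
    and fs: "semi_I_open T I V" and fb: "b_I_open T I V" and fw: "weakly_I_local_closed T I V"
    if o: "openin T V"
  proof -
    have i: "T interior_of V = V" using o by (simp add: interior_of_openin)
    have p: "V \<subseteq> T interior_of (cl_star T I V)" using o Vc by (simp add: interior_of_maximal)
    have gV: "gamma_open T g V" using go o by simp
    show "pre_gamma_I_open T I g V"
      unfolding pre_gamma_I_open_def gamma_interior_def using gV Vc by blast
    show "weakly_I_local_closed T I V"
      unfolding weakly_I_local_closed_def
    proof (intro exI conjI)
      show "openin T V" by (rule o)
      show "topspace T \<subseteq> topspace T" by simp
      show "local_fun T I (topspace T) \<subseteq> topspace T" unfolding local_fun_def by blast
      show "V = V \<inter> topspace T" using assms(5) by blast
    qed
    show "alpha_I_open T I V" unfolding alpha_I_open_def i by (rule p)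
    show "pre_I_open T I V" unfolding pre_I_open_def by (rule p)
    show "semi_I_open T I V" unfolding semi_I_open_def i by (rule Vc)
    show "b_I_open T I V" unfolding b_I_open_def using p by blast
  qed
  have a: "b_I_open T I V" if "alpha_I_open T I V"
  proof -
    have "T interior_of (cl_star T I (T interior_of V)) \<subseteq> T interior_of (cl_star T I V)"
      by (intro interior_of_mono clstar_mono[OF assms(1)]) (simp add: interior_of_subset)
    then show ?thesis using that unfolding alpha_I_open_def b_I_open_def by blast
  qed
  have pgb: "b_I_open T I V" if "pre_gamma_I_open T I g V"
    using gi[of "cl_star T I V"] that unfolding pre_gamma_I_open_def b_I_open_def by blast
  have pb: "b_I_open T I V" if "pre_I_open T I V" using that unfolding pre_I_open_def b_I_open_def by blast
  have sb: "b_I_open T I V" if "semi_I_open T I V" using that unfolding semi_I_open_def b_I_open_def by blast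
  have bk: "openin T V" if "b_I_open T I V" "weakly_I_local_closed T I V"
    using key[OF assms(1,2) that] .
  show ?thesis unfolding go
  proof (intro conjI iffI)
  qed (auto intro: fa fpg fp fs fb fw bk a pgb pb sb)
qed
end
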